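(* Let $n\in\{2,3\}$, let $D=\bigcup_{m=1}^{M}D_m\subset\mathbb{R}^n$ be a finite union of bounded domains with pairwise disjoint closures, let $k_{max}>0$, let $d\in S^{n-1}$ be a given direction, let $f\in L^2(\mathbb{R}^n)$ vanish outside $D$, and let $F(y,k)=f(y)e^{iky\cdot d}$. The far field pattern is $$u^\infty(\theta,k)=\int_D e^{-ik\theta\cdot y}F(y,k)\,dy=\int_D e^{-ik(\theta-d)\cdot y}f(y)\,dy,\qquad \theta\in S^{n-1},\ k\in(0,k_{max}).$$ Fix an observation direction $\theta\in S^{n-1}$ with $\theta\neq d$ and set $\theta_d:=(\theta-d)/|\theta-d|$. Assume that the set $$\{\tau\in\mathbb{R}\,:\,\Pi_\tau\subset S_D(\theta_d),\ \hat f(\tau)=0\}$$ has Lebesgue measure zero. Then the strip $S_D(\theta_d)$ (the strip with normal direction $\theta-d$) is uniquely determined by the far field data $u^\infty(\theta,k)$, $k\in(0,k_{max})$; that is, if $D'$, $f'$ is a second pair satisfying the same hypotheses (with the same $d$ and $\theta$) and $u^\infty(\theta,k)=u'^\infty(\theta,k)$ for all $k\in(0,k_{max})$, then $S_D(\theta_d)=S_{D'}(\theta_d)$.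
   Context: For $\tau\in\mathbb{R}$, $\Pi_\tau:=\{y\in\mathbb{R}^n: y\cdot\theta_d+\tau=0\}$, $\hat f(\tau):=\int_{\Pi_\tau}f(y)\,ds(y)$, and for a unit vector $\omega$, $S_D(\omega):=\{y\in\mathbb{R}^n:\ \inf_{z\in D}z\cdot\omega\le y\cdot\omega\le\sup_{z\in D}z\cdot\omega\}$. *)

theory Defs
  imports "HOL-Analysis.Analysis"
begin

definition hplane :: "real^'n \<Rightarrow> real \<Rightarrow> (real^'n) set" where
  "hplane \<omega> \<tau> = {y. y \<bullet> \<omega> + \<tau> = 0}"

text \<open>Surface (n-1 dimensional Lebesgue) integral over the hyperplane \<open>\<Pi>_\<tau>\<close> for a unit
  normal \<omega>: the image of Lebesgue measure on R^(n-1) (the coordinates other than a fixed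
  index i0) under an affine isometry onto the hyperplane.\<close>
definition hplane_integral :: "real^'n \<Rightarrow> real \<Rightarrow> (real^'n \<Rightarrow> complex) \<Rightarrow> complex" where
  "hplane_integral \<omega> \<tau> f =
     (let i0 = (SOME i::'n. True);
          Q = (SOME Q::real^'n\<Rightarrow>real^'n. orthogonal_transformation Q \<and> Q (axis i0 1) = \<omega>)
      in integral\<^sup>L (Pi\<^sub>M (UNIV - {i0}) (\<lambda>_. lborel))
           (\<lambda>x::'n\<Rightarrow>real. f (Q (\<chi> i. if i = i0 then - \<tau> else x i))))"

definition fhat :: "real^'n \<Rightarrow> (real^'n \<Rightarrow> complex) \<Rightarrow> real \<Rightarrow> complex" where
  "fhat \<omega> f \<tau> = hplane_integral \<omega> \<tau> f"

definition strip :: "(real^'n) set \<Rightarrow> real^'n \<Rightarrow> (real^'n) set" where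
  "strip D \<omega> = {y. (INF z\<in>D. z \<bullet> \<omega>) \<le> y \<bullet> \<omega> \<and> y \<bullet> \<omega> \<le> (SUP z\<in>D. z \<bullet> \<omega>)}"

definition bounded_domain :: "(real^'n) set \<Rightarrow> bool" where
  "bounded_domain U \<longleftrightarrow> U \<noteq> {} \<and> open U \<and> connected U \<and> bounded U"

definition admissible_domain :: "(nat \<Rightarrow> (real^'n) set) \<Rightarrow> nat \<Rightarrow> bool" where
  "admissible_domain Ds M \<longleftrightarrow> M \<ge> 1 \<and> (\<forall>m\<in>{1..M}. bounded_domain (Ds m)) \<and>
     (\<forall>m\<in>{1..M}. \<forall>m'\<in>{1..M}. m \<noteq> m' \<longrightarrow> closure (Ds m) \<inter> closure (Ds m') = {})"

definition union_dom :: "(nat \<Rightarrow> (real^'n) set) \<Rightarrow> nat \<Rightarrow> (real^'n) set" where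
  "union_dom Ds M = (\<Union>m\<in>{1..M}. Ds m)"

definition L2 :: "(real^'n \<Rightarrow> complex) \<Rightarrow> bool" where
  "L2 f \<longleftrightarrow> f \<in> borel_measurable lebesgue \<and> integrable lebesgue (\<lambda>y. (norm (f y))\<^sup>2)"

definition source_F :: "(real^'n \<Rightarrow> complex) \<Rightarrow> real^'n \<Rightarrow> real^'n \<Rightarrow> real \<Rightarrow> complex" where
  "source_F f d y k = f y * exp (\<i> * complex_of_real (k * (y \<bullet> d)))"

definition far_field :: "(real^'n) set \<Rightarrow> (real^'n \<Rightarrow> complex) \<Rightarrow> real^'n \<Rightarrow> real^'n \<Rightarrow> real \<Rightarrow> complex" where
  "far_field D f d \<theta> k =
     (LINT y:D|lebesgue. exp (- \<i> * complex_of_real (k * (\<theta> \<bullet> y))) * source_F f d y k)"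

end

theory Submission
  imports Defs "HOL-Probability.Probability" "HOL-Complex_Analysis.Complex_Analysis"
begin


lemma prod_Basis_vec:
  "(\<Prod>b\<in>(Basis::(real^'n) set). g b) = (\<Prod>i\<in>UNIV. g (axis i 1))"
proof -
  have e: "(Basis::(real^'n) set) = (\<lambda>i. axis i 1) ` UNIV"
    by (auto simp: Basis_vec_def)
  have "inj (\<lambda>i::'n. axis i (1::real))"
    by (auto simp: inj_def axis_eq_axis)
  then show ?thesis unfolding e by (simp add: prod.reindex o_def)
qed

lemma measurable_vec_lambda_PiM:
  "(\<lambda>x. vec_lambda x) \<in> measurable (Pi\<^sub>M UNIV (\<lambda>_. lborel)) (borel :: (real^'n) measure)"
  by (subst borel_measurable_euclidean_space)
     (auto simp: Basis_vec_def inner_axis measurable_component_singleton)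

lemma lborel_vec:
  "distr (Pi\<^sub>M UNIV (\<lambda>_. lborel)) borel (\<lambda>x. vec_lambda x) = (lborel :: (real^'n) measure)"
proof (rule lborel_eqI[symmetric])
  interpret finite_product_sigma_finite "\<lambda>_::'n. lborel::real measure" UNIV
    by standard simp
  fix l u :: "real^'n"
  assume le: "\<And>b. b \<in> Basis \<Longrightarrow> l \<bullet> b \<le> u \<bullet> b"
  have le': "l $ i \<le> u $ i" for i using le[of "axis i 1"] by (auto simp: Basis_vec_def inner_axis)
  have pre: "(\<lambda>x. vec_lambda x) -` box l u \<inter> space (Pi\<^sub>M UNIV (\<lambda>_. lborel)) = Pi\<^sub>E UNIV (\<lambda>i. {l$i<..<u$i})"
    by (auto simp: space_PiM mem_box_cart PiE_def extensional_def Pi_def)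
  show "emeasure (distr (Pi\<^sub>M UNIV (\<lambda>_. lborel)) borel (\<lambda>x. vec_lambda x)) (box l u) = (\<Prod>b\<in>Basis. (u - l) \<bullet> b)"
    using le'
    by (simp add: emeasure_distr[OF measurable_vec_lambda_PiM] pre measure_times prod_Basis_vec inner_axis
         prod_ennreal)
qed simp


lemma lborel_orth_wo:
  fixes Q :: "real^'m::{finite,wellorder} \<Rightarrow> real^'m::{finite,wellorder}"
  assumes Q: "orthogonal_transformation Q"
  shows "distr lborel borel Q = lborel"
proof (rule lborel_eqI[symmetric])
  have lin: "linear Q" using Q by (simp add: orthogonal_transformation_linear)
  have mQ: "Q \<in> borel_measurable borel"
    using lin by (intro borel_measurable_continuous_onI linear_continuous_on) (simp add: linear_conv_bounded_linear)
  have bij: "bij Q" using Q by (simp add: orthogonal_transformation_bij)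
  have Qi: "orthogonal_transformation (inv Q)" using Q by (simp add: orthogonal_transformation_inv)
  fix l u :: "real^'m::{finite,wellorder}"
  assume le: "\<And>b. b \<in> Basis \<Longrightarrow> l \<bullet> b \<le> u \<bullet> b"
  have pre: "Q -` box l u = inv Q ` box l u"
    using bij by (simp add: bij_vimage_eq_inv_image)
  have bm: "box l u \<in> lmeasurable" by simp
  have im: "inv Q ` box l u \<in> lmeasurable" by (rule measurable_orthogonal_image[OF Qi bm])
  have sb: "Q -` box l u \<in> sets lborel"
    using mQ by (simp add: measurable_sets_borel)
  have "emeasure lborel (Q -` box l u) = emeasure lebesgue (Q -` box l u)"
    using sb by (simp add: emeasure_completion)
  also have "\<dots> = measure lebesgue (inv Q ` box l u)"
    using im pre by (simp add: emeasure_eq_measure2)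
  also have "\<dots> = measure lebesgue (box l u)"
    by (simp add: measure_orthogonal_image[OF Qi bm])
  also have "\<dots> = emeasure lebesgue (box l u)"
    using bm by (simp add: emeasure_eq_measure2)
  also have "\<dots> = emeasure lborel (box l u)"
    by (simp add: emeasure_completion)
  finally show "emeasure (distr lborel borel Q) (box l u) = (\<Prod>b\<in>Basis. (u - l) \<bullet> b)"
    using le mQ by (subst emeasure_distr) (auto simp del: emeasure_lborel_box intro!: emeasure_lborel_box)
qed simp


definition relab :: "('n \<Rightarrow> 'm) \<Rightarrow> real^'n \<Rightarrow> real^'m" where
  "relab p x = (\<chi> j. x $ (inv p j))"

lemma relab_apply: "bij p \<Longrightarrow> relab p x $ p i = x $ i"
  by (simp add: relab_def bij_is_inj)

lemma relab_linear: "linear (relab p)"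
  by (auto simp: relab_def linear_iff vec_eq_iff)

lemma relab_inner:
  assumes "bij (p::'n::finite \<Rightarrow> 'm::finite)"
  shows "relab p x \<bullet> relab p y = x \<bullet> y"
proof -
  have "relab p x \<bullet> relab p y = (\<Sum>j\<in>UNIV. relab p x $ j * relab p y $ j)"
    by (simp add: inner_vec_def)
  also have "\<dots> = (\<Sum>i\<in>UNIV. relab p x $ p i * relab p y $ p i)"
    using assms by (subst sum.reindex_bij_betw[symmetric, where h=p and S=UNIV]) (auto simp: bij_betw_def)
  also have "\<dots> = x \<bullet> y" using assms by (simp add: relab_apply inner_vec_def)
  finally show ?thesis .
qed

lemma relab_orth: "bij (p::'n::finite \<Rightarrow> 'm::finite) \<Longrightarrow> orthogonal_transformation (relab p)"
  by (simp add: orthogonal_transformation_def relab_linear relab_inner)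

lemma relab_inv: "bij p \<Longrightarrow> relab (inv p) (relab p x) = x"
  by (simp add: relab_def vec_eq_iff bij_is_inj inv_inv_eq)

lemma relab_inv2: "bij p \<Longrightarrow> relab p (relab (inv p) x) = x"
  using relab_inv[of "inv p" x] by (simp add: inv_inv_eq bij_imp_bij_inv)

lemma lborel_relab:
  assumes p: "bij (p::'n::finite \<Rightarrow> 'm::finite)"
  shows "distr lborel borel (relab p) = lborel"
proof (rule lborel_eqI[symmetric])
  have mP: "relab p \<in> borel_measurable borel"
    using relab_linear by (intro borel_measurable_continuous_onI linear_continuous_on) (simp add: linear_conv_bounded_linear)
  fix l u :: "real^'m"
  assume le: "\<And>b. b \<in> Basis \<Longrightarrow> l \<bullet> b \<le> u \<bullet> b"
  have le': "l $ j \<le> u $ j" for j using le[of "axis j 1"] by (auto simp: Basis_vec_def inner_axis)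
  define l' :: "real^'n" where "l' = (\<chi> i. l $ p i)"
  define u' :: "real^'n" where "u' = (\<chi> i. u $ p i)"
  have pre: "relab p -` box l u = box l' u'"
  proof -
    have "x \<in> relab p -` box l u \<longleftrightarrow> x \<in> box l' u'" for x
    proof -
      have "x \<in> relab p -` box l u \<longleftrightarrow> (\<forall>j. l $ j < relab p x $ j \<and> relab p x $ j < u $ j)"
        by (simp add: mem_box_cart)
      also have "\<dots> \<longleftrightarrow> (\<forall>i. l $ p i < relab p x $ p i \<and> relab p x $ p i < u $ p i)"
        using p by (metis bij_pointE)
      also have "\<dots> \<longleftrightarrow> x \<in> box l' u'"
        using p by (simp add: relab_apply mem_box_cart l'_def u'_def)
      finally show ?thesis .
    qed
    then show ?thesis by blast
  qed
  have "emeasure lborel (box l' u') = (\<Prod>b\<in>Basis. (u' - l') \<bullet> b)"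
    using le' by (intro emeasure_lborel_box) (auto simp: Basis_vec_def inner_axis l'_def u'_def)
  also have "\<dots> = (\<Prod>i\<in>UNIV. u $ p i - l $ p i)"
    by (simp add: prod_Basis_vec inner_axis l'_def u'_def)
  also have "\<dots> = (\<Prod>j\<in>UNIV. u $ j - l $ j)"
    using p by (subst prod.reindex_bij_betw[symmetric, where h=p and S=UNIV]) (auto simp: bij_betw_def)
  also have "\<dots> = (\<Prod>b\<in>Basis. (u - l) \<bullet> b)"
    by (simp add: prod_Basis_vec inner_axis)
  finally show "emeasure (distr lborel borel (relab p)) (box l u) = (\<Prod>b\<in>Basis. (u - l) \<bullet> b)"
    using mP by (subst emeasure_distr) (auto simp: pre simp del: emeasure_lborel_box)
qed simp

lemma lborel_orth_transport:
  fixes Q :: "real^'n::finite \<Rightarrow> real^'n"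
  assumes Q: "orthogonal_transformation Q"
    and p: "bij (p::'n \<Rightarrow> 'm::{finite,wellorder})"
  shows "distr lborel borel Q = lborel"
proof -
  define Q' where "Q' = relab p \<circ> Q \<circ> relab (inv p)"
  have pi: "bij (inv p)" using p by (simp add: bij_imp_bij_inv)
  have Q': "orthogonal_transformation Q'"
    unfolding Q'_def
    by (intro orthogonal_transformation_compose relab_orth Q p pi)
  have eq: "Q = relab (inv p) \<circ> Q' \<circ> relab p"
    using p by (auto simp: Q'_def fun_eq_iff relab_inv relab_inv2)
  have mP: "relab p \<in> borel_measurable borel" "relab (inv p) \<in> borel_measurable borel"
    "Q' \<in> borel_measurable borel"
    using relab_linear orthogonal_transformation_linear[OF Q']
    by (auto intro!: borel_measurable_continuous_onI linear_continuous_on simp: linear_conv_bounded_linear)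
  have "distr lborel borel Q = distr (distr (distr lborel borel (relab p)) borel Q') borel (relab (inv p))"
    using mP by (simp add: eq distr_distr comp_assoc)
  also have "\<dots> = lborel"
    using p pi Q' by (simp add: lborel_relab lborel_orth_wo)
  finally show ?thesis .
qed

lemma lborel_orth:
  fixes Q :: "real^'n::finite \<Rightarrow> real^'n"
  assumes Q: "orthogonal_transformation Q"
    and dim: "CARD('n) = 2 \<or> CARD('n) = 3"
  shows "distr lborel borel Q = lborel"
  using dim
proof
  assume "CARD('n) = 2"
  then obtain p :: "'n \<Rightarrow> 2" where "bij_betw p UNIV UNIV"
    using finite_same_card_bij[of "UNIV::'n set" "UNIV::2 set"] by auto
  then show ?thesis using lborel_orth_transport[OF Q] by (simp add: bij_betw_def bij_def)
next
  assume "CARD('n) = 3"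
  then obtain p :: "'n \<Rightarrow> 3" where "bij_betw p UNIV UNIV"
    using finite_same_card_bij[of "UNIV::'n set" "UNIV::3 set"] by auto
  then show ?thesis using lborel_orth_transport[OF Q] by (simp add: bij_betw_def bij_def)
qed


definition emb :: "'n \<Rightarrow> real \<times> ('n \<Rightarrow> real) \<Rightarrow> real^'n" where
  "emb i0 z = (\<chi> i. if i = i0 then fst z else snd z i)"

lemma emb_measurable:
  "emb i0 \<in> measurable (lborel \<Otimes>\<^sub>M Pi\<^sub>M (UNIV - {i0}) (\<lambda>_. lborel)) (borel :: (real^'n::finite) measure)"
proof (subst borel_measurable_euclidean_space, intro ballI)
  fix b :: "real^'n" assume "b \<in> Basis"
  then obtain i where b: "b = axis i 1" by (auto simp: Basis_vec_def)
  show "(\<lambda>x. emb i0 x \<bullet> b) \<in> borel_measurable (lborel \<Otimes>\<^sub>M Pi\<^sub>M (UNIV - {i0}) (\<lambda>_. lborel))"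
  proof (cases "i = i0")
    case True
    then show ?thesis by (simp add: b emb_def inner_axis)
  next
    case False
    have "(\<lambda>x. snd x i) \<in> borel_measurable (lborel \<Otimes>\<^sub>M Pi\<^sub>M (UNIV - {i0}) (\<lambda>_. lborel))"
      using False by (intro measurable_compose[OF measurable_snd] measurable_component_singleton) simp
    then show ?thesis using False by (simp add: b emb_def inner_axis)
  qed
qed

lemma lborel_emb:
  "distr (lborel \<Otimes>\<^sub>M Pi\<^sub>M (UNIV - {i0}) (\<lambda>_. lborel)) borel (emb i0) = (lborel :: (real^'n::finite) measure)"
proof -
  let ?J = "UNIV - {i0}"
  let ?L = "\<lambda>_::'n. lborel :: real measure"
  interpret ps: product_sigma_finite ?L by standard
  interpret J: finite_product_sigma_finite ?L ?J by standard simp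
  interpret I: finite_product_sigma_finite ?L "{i0}" by standard simp
  have U: "{i0} \<union> ?J = UNIV" by auto
  have m1: "(\<lambda>x. x i0) \<in> measurable (Pi\<^sub>M {i0} ?L) lborel"
    by (simp add: measurable_component_singleton)
  have "lborel \<Otimes>\<^sub>M Pi\<^sub>M ?J ?L = distr (Pi\<^sub>M {i0} ?L) lborel (\<lambda>x. x i0) \<Otimes>\<^sub>M distr (Pi\<^sub>M ?J ?L) (Pi\<^sub>M ?J ?L) (\<lambda>x. x)"
    by (simp add: ps.distr_singleton)
  also have "\<dots> = distr (Pi\<^sub>M {i0} ?L \<Otimes>\<^sub>M Pi\<^sub>M ?J ?L) (lborel \<Otimes>\<^sub>M Pi\<^sub>M ?J ?L) (\<lambda>(x, y). (x i0, y))"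
    by (rule pair_measure_distr[OF m1 measurable_ident_sets[OF refl]]) (simp add: J.sigma_finite_measure_axioms)
  finally have eq1: "lborel \<Otimes>\<^sub>M Pi\<^sub>M ?J ?L = distr (Pi\<^sub>M {i0} ?L \<Otimes>\<^sub>M Pi\<^sub>M ?J ?L) (lborel \<Otimes>\<^sub>M Pi\<^sub>M ?J ?L) (\<lambda>(x, y). (x i0, y))" .
  have m2: "(\<lambda>(x, y). (x i0, y)) \<in> measurable (Pi\<^sub>M {i0} ?L \<Otimes>\<^sub>M Pi\<^sub>M ?J ?L) (lborel \<Otimes>\<^sub>M Pi\<^sub>M ?J ?L)"
    by measurable
  have eqf: "emb i0 ((\<lambda>(x, y). (x i0, y)) z) = vec_lambda (merge {i0} ?J z)" for z :: "('n \<Rightarrow> real) \<times> ('n \<Rightarrow> real)"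
    by (cases z) (auto simp: emb_def merge_def vec_eq_iff)
  have "distr (lborel \<Otimes>\<^sub>M Pi\<^sub>M ?J ?L) borel (emb i0)
      = distr (Pi\<^sub>M {i0} ?L \<Otimes>\<^sub>M Pi\<^sub>M ?J ?L) borel (emb i0 \<circ> (\<lambda>(x, y). (x i0, y)))"
    by (subst eq1, subst distr_distr[OF emb_measurable m2]) simp
  also have "\<dots> = distr (Pi\<^sub>M {i0} ?L \<Otimes>\<^sub>M Pi\<^sub>M ?J ?L) borel (vec_lambda \<circ> merge {i0} ?J)"
    by (rule distr_cong) (auto simp: eqf)
  also have "\<dots> = distr (distr (Pi\<^sub>M {i0} ?L \<Otimes>\<^sub>M Pi\<^sub>M ?J ?L) (Pi\<^sub>M ({i0} \<union> ?J) ?L) (merge {i0} ?J)) borel vec_lambda"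
    using measurable_merge[of "{i0}" ?J ?L] unfolding U
    by (subst distr_distr) (auto intro: measurable_vec_lambda_PiM)
  also have "\<dots> = distr (Pi\<^sub>M UNIV ?L) borel vec_lambda"
    by (subst ps.distr_merge) (auto simp: U)
  also have "\<dots> = lborel" by (rule lborel_vec)
  finally show ?thesis .
qed


lemma FT_powser:
  fixes h :: "real \<Rightarrow> complex" and z :: complex and l0 R :: real
  assumes R0: "R \<ge> 0" and h: "integrable lborel h" and supp: "\<And>s. \<bar>s\<bar> > R \<Longrightarrow> h s = 0"
  defines "a \<equiv> (\<lambda>n. \<integral>s. h s * exp (- \<i> * of_real (l0 * s)) * (- \<i> * of_real s) ^ n / fact n \<partial>lborel)"
  shows "(\<lambda>n. a n * z ^ n) sums (\<integral>s. h s * exp (- \<i> * of_real (l0 * s)) * exp (- \<i> * z * of_real s) \<partial>lborel)"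
proof -
  have R: "R \<ge> 0 \<or> (\<forall>s. h s = 0)"
    using supp by (metis abs_ge_zero le_less_trans linorder_not_le)
  define g where "g n s = h s * exp (- \<i> * of_real (l0 * s)) * (- \<i> * of_real s) ^ n / fact n * z ^ n" for n s
  have hm[measurable]: "h \<in> borel_measurable lborel" using h by auto
  have gm[measurable]: "g n \<in> borel_measurable lborel" for n unfolding g_def by measurable
  have bound: "norm (g n s) \<le> norm (h s) * ((R * norm z) ^ n / fact n)" for n s
  proof (cases "\<bar>s\<bar> > R")
    case True then show ?thesis by (simp add: g_def supp)
  next
    case False
    then have "norm (of_real s :: complex) \<le> R" by simp
    then have "norm ((- \<i> * of_real s) ^ n * z ^ n) \<le> (R * norm z) ^ n"
      by (simp add: norm_mult norm_power power_mult_distrib[symmetric] power_mono mult_right_mono)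
    then have "norm ((- \<i> * of_real s) ^ n * z ^ n) / fact n \<le> (R * norm z) ^ n / fact n"
      by (rule divide_right_mono) simp
    then have "norm (h s) * (norm ((- \<i> * of_real s) ^ n * z ^ n) / fact n) \<le> norm (h s) * ((R * norm z) ^ n / fact n)"
      by (rule mult_left_mono) simp
    moreover have "norm (g n s) = norm (h s) * (norm ((- \<i> * of_real s) ^ n * z ^ n) / fact n)"
      by (simp add: g_def norm_mult norm_divide)
    ultimately show ?thesis by simp
  qed
  have bound': "norm (g n s) \<le> norm (h s) * (R * norm z) ^ n / fact n" for n s
    using bound[of n s] by simp
  have gi: "integrable lborel (g n)" for n
    by (rule Bochner_Integration.integrable_bound[OF integrable_mult_left[OF integrable_norm[OF h], of "(R * norm z) ^ n / fact n"]])
       (use bound R0 in \<open>auto intro!: AE_I2 simp: abs_mult\<close>)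
  have ex: "exp (- \<i> * z * of_real s) = (\<Sum>n. (- \<i> * of_real s) ^ n / fact n * z ^ n)" for s
  proof -
    have e: "(- (\<i> * (z * complex_of_real s))) ^ n = z ^ n * (- (\<i> * complex_of_real s)) ^ n" for n
      by (metis (no_types, lifting) mult.left_commute mult_minus_right power_mult_distrib)
    show ?thesis
      by (simp add: exp_def scaleR_conv_of_real divide_inverse mult_ac e)
  qed
  have sum_g: "(\<Sum>n. g n s) = h s * exp (- \<i> * of_real (l0 * s)) * exp (- \<i> * z * of_real s)" for s
  proof -
    have eqs: "(\<lambda>n. (- \<i> * of_real s) ^ n / fact n * z ^ n) = (\<lambda>n. ((- \<i> * of_real s) * z)^n /\<^sub>R fact n)"
      by (auto simp: fun_eq_iff scaleR_conv_of_real divide_inverse simp flip: power_mult_distrib)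
    have "(\<lambda>n. h s * exp (- \<i> * of_real (l0 * s)) * ((- \<i> * of_real s) ^ n / fact n * z ^ n)) sums
          (h s * exp (- \<i> * of_real (l0 * s)) * exp (- \<i> * z * of_real s))"
      unfolding ex by (intro sums_mult summable_sums) (simp only: eqs summable_exp_generic)
    then show ?thesis by (simp add: g_def sums_iff mult_ac)
  qed
  have se: "summable (\<lambda>n. (R * norm z) ^ n / fact n)"
    using summable_exp[of "R * norm z"] by (simp add: divide_inverse mult.commute)
  have sn: "summable (\<lambda>n. norm (h s) * ((R * norm z) ^ n / fact n))" for s
    by (intro summable_mult se)
  have "AE s in lborel. summable (\<lambda>n. norm (g n s))"
  proof (intro AE_I2)
    fix s
    show "summable (\<lambda>n. norm (g n s))"
      by (rule summable_comparison_test[OF _ sn[of s]]) (use bound in auto)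
  qed
  moreover have "summable (\<lambda>n. \<integral>s. norm (g n s) \<partial>lborel)"
  proof (rule summable_comparison_test[OF _ summable_mult[OF se]])
    show "\<exists>N. \<forall>n\<ge>N. norm (\<integral>s. norm (g n s) \<partial>lborel) \<le> (\<integral>s. norm (h s) \<partial>lborel) * ((R * norm z) ^ n / fact n)"
    proof (intro exI[of _ 0] allI impI)
      fix n :: nat
      have "norm (\<integral>s. norm (g n s) \<partial>lborel) = (\<integral>s. norm (g n s) \<partial>lborel)"
        by (simp add: integral_nonneg_AE)
      also have "\<dots> \<le> (\<integral>s. norm (h s) * ((R * norm z) ^ n / fact n) \<partial>lborel)"
        using gi h bound' by (intro integral_mono) auto
      also have "\<dots> = (\<integral>s. norm (h s) \<partial>lborel) * ((R * norm z) ^ n / fact n)"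
        by simp
      finally show "norm (\<integral>s. norm (g n s) \<partial>lborel) \<le> (\<integral>s. norm (h s) \<partial>lborel) * ((R * norm z) ^ n / fact n)" .
    qed
  qed
  ultimately have "(\<lambda>n. integral\<^sup>L lborel (g n)) sums (\<integral>s. (\<Sum>n. g n s) \<partial>lborel)"
    using gi by (intro sums_integral) auto
  moreover have "integral\<^sup>L lborel (g n) = a n * z ^ n" for n
    unfolding g_def a_def by simp
  ultimately show ?thesis by (simp add: sum_g)
qed


lemma FT_zero_ext:
  fixes h :: "real \<Rightarrow> complex" and l0 R :: real
  assumes R0: "R \<ge> 0" and h: "integrable lborel h" and supp: "\<And>s. \<bar>s\<bar> > R \<Longrightarrow> h s = 0"
    and l0: "l0 > 0"
    and z: "\<And>\<mu>. \<bar>\<mu>\<bar> < l0 \<Longrightarrow> (\<integral>s. h s * exp (- \<i> * of_real ((l0 + \<mu>) * s)) \<partial>lborel) = 0"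
  shows "(\<integral>s. h s * exp (- \<i> * of_real (lam * s)) \<partial>lborel) = 0"
proof -
  define a where "a = (\<lambda>n. \<integral>s. h s * exp (- \<i> * of_real (l0 * s)) * (- \<i> * of_real s) ^ n / fact n \<partial>lborel)"
  define F where "F z = (\<integral>s. h s * exp (- \<i> * of_real (l0 * s)) * exp (- \<i> * z * of_real s) \<partial>lborel)" for z
  have sm: "(\<lambda>n. a n * z ^ n) sums F z" for z
    unfolding a_def F_def by (rule FT_powser[OF R0 h supp])
  have Fr: "F (of_real \<mu>) = (\<integral>s. h s * exp (- \<i> * of_real ((l0 + \<mu>) * s)) \<partial>lborel)" for \<mu>
  proof -
    have "exp (- \<i> * of_real (l0 * s)) * exp (- \<i> * of_real \<mu> * of_real s) = exp (- \<i> * of_real ((l0 + \<mu>) * s))" for s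
      by (simp add: exp_add[symmetric] algebra_simps)
    then show ?thesis unfolding F_def by (simp add: mult.assoc)
  qed
  have F0: "F (of_real \<mu>) = 0" if "\<bar>\<mu>\<bar> < l0" for \<mu>
    using z[OF that] Fr by simp
  have a0: "a n = 0" for n
  proof (rule ccontr)
    assume an: "a n \<noteq> 0"
    show False
    proof (cases "n = 0")
      case True
      have "(\<lambda>n. a n * 0 ^ n) sums F 0" by (rule sm)
      then have "a 0 = F 0" by simp
      also have "\<dots> = 0" using F0[of 0] l0 by simp
      finally show False using an True by simp
    next
      case False
      have F00: "F 0 = 0" using F0[of 0] l0 by simp
      obtain r where r: "0 < r" and nz: "\<And>z. z \<in> cball 0 r - {0} \<Longrightarrow> F z \<noteq> 0"
        using powser_0_nonzero[where r=1 and a=a and \<xi>=0 and f=F and m=n] sm F00 an False by auto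
      define m where "m = min r l0 / 2"
      have "m > 0" "m \<le> r" "m < l0" using r l0 by (auto simp: m_def)
      then have "F (of_real m) \<noteq> 0" by (intro nz) auto
      moreover have "F (of_real m) = 0" using F0[of m] \<open>m > 0\<close> \<open>m < l0\<close> by simp
      ultimately show False by simp
    qed
  qed
  have "F (of_real (lam - l0)) = 0"
    using sm[of "of_real (lam - l0)"] by (simp add: a0 sums_iff)
  then show ?thesis using Fr[of "lam - l0"] by simp
qed


lemma FT_unique_real_nonneg:
  fixes p q :: "real \<Rightarrow> real"
  assumes p: "integrable lborel p" and q: "integrable lborel q"
    and p0: "\<And>x. p x \<ge> 0" and q0: "\<And>x. q x \<ge> 0"
    and eq: "\<And>t. (\<integral>x. of_real (p x) * iexp (t * x) \<partial>lborel) = (\<integral>x. of_real (q x) * iexp (t * x) \<partial>lborel)"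
  shows "AE x in lborel. p x = q x"
proof -
  have [measurable]: "p \<in> borel_measurable borel" "q \<in> borel_measurable borel"
    using p q by auto
  have "(\<integral>x. of_real (p x) \<partial>lborel) = (complex_of_real (\<integral>x. q x \<partial>lborel))"
    using eq[of 0] by simp
  then have m: "(\<integral>x. p x \<partial>lborel) = (\<integral>x. q x \<partial>lborel)" by simp
  define m where "m = (\<integral>x. p x \<partial>lborel)"
  have m0: "m \<ge> 0" unfolding m_def using p0 by simp
  show ?thesis
  proof (cases "m = 0")
    case True
    have "AE x in lborel. p x = 0"
      using True p p0 unfolding m_def by (subst (asm) integral_nonneg_eq_0_iff_AE) auto
    moreover have "(\<integral>x. q x \<partial>lborel) = 0" using True m unfolding m_def by simp
    then have "AE x in lborel. q x = 0"
      using q q0 by (subst (asm) integral_nonneg_eq_0_iff_AE) auto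
    ultimately show ?thesis by eventually_elim simp
  next
    case False
    then have mpos: "m > 0" using m0 by simp
    define M1 where "M1 = density lborel (\<lambda>x. ennreal (p x / m))"
    define M2 where "M2 = density lborel (\<lambda>x. ennreal (q x / m))"
    have rd: "real_distribution (density lborel (\<lambda>x. ennreal (r x / m)))"
      if r: "integrable lborel r" "\<And>x. r x \<ge> 0" "(\<integral>x. r x \<partial>lborel) = m" for r
    proof -
      have [measurable]: "r \<in> borel_measurable borel" using r by auto
      have "emeasure (density lborel (\<lambda>x. ennreal (r x / m))) UNIV = (\<integral>\<^sup>+x. ennreal (r x / m) \<partial>lborel)"
        by (simp add: emeasure_density)
      also have "\<dots> = ennreal (\<integral>x. r x / m \<partial>lborel)"
        using r mpos by (intro nn_integral_eq_integral) auto
      also have "\<dots> = 1" using r mpos by simp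
      finally show ?thesis
        by (intro real_distribution.intro prob_spaceI real_distribution_axioms.intro) auto
    qed
    have r1: "real_distribution M1" unfolding M1_def using p p0 by (intro rd) (auto simp: m_def)
    have r2: "real_distribution M2" unfolding M2_def using q q0 m by (intro rd) (auto simp: m_def)
    have ch: "char (density lborel (\<lambda>x. ennreal (r x / m))) t = (\<integral>x. of_real (r x) * iexp (t * x) \<partial>lborel) / m"
      if r: "integrable lborel r" "\<And>x. r x \<ge> 0" for r t
    proof -
      have [measurable]: "r \<in> borel_measurable borel" using r by auto
      have "char (density lborel (\<lambda>x. ennreal (r x / m))) t = (\<integral>x. (r x / m) *\<^sub>R iexp (t * x) \<partial>lborel)"
        unfolding char_def using r mpos by (subst integral_density) auto
      also have "\<dots> = (\<integral>x. of_real (r x) * iexp (t * x) / m \<partial>lborel)"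
        by (simp add: scaleR_conv_of_real)
      also have "\<dots> = (\<integral>x. of_real (r x) * iexp (t * x) \<partial>lborel) / m"
        by simp
      finally show ?thesis .
    qed
    have "char M1 = char M2"
    proof
      fix t
      show "char M1 t = char M2 t"
        unfolding M1_def M2_def using p q p0 q0 by (simp only: ch eq)
    qed
    then have "M1 = M2" using Levy_uniqueness r1 r2 by blast
    then have "AE x in lborel. ennreal (p x / m) = ennreal (q x / m)"
      unfolding M1_def M2_def by (intro sigma_finite_measure.density_unique[OF sigma_finite_lborel]) auto
    then show ?thesis
      by eventually_elim (use mpos p0 q0 in \<open>auto simp: divide_right_mono\<close>)
  qed
qed

lemma FT_unique_real:
  fixes g :: "real \<Rightarrow> real"
  assumes g: "integrable lborel g"
    and z: "\<And>t. (\<integral>x. of_real (g x) * iexp (t * x) \<partial>lborel) = 0"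
  shows "AE x in lborel. g x = 0"
proof -
  define p where "p x = max (g x) 0" for x
  define q where "q x = max (- g x) 0" for x
  have pi: "integrable lborel p" unfolding p_def using g by (intro integrable_max) auto
  have qi: "integrable lborel q" unfolding q_def using g by (intro integrable_max) auto
  have gpq: "g x = p x - q x" for x by (simp add: p_def q_def max_def)
  have ie: "integrable lborel (\<lambda>x. of_real (r x) * iexp (t * x))" if "integrable lborel r" for r t
  proof -
    have [measurable]: "r \<in> borel_measurable borel" using that by auto
    show ?thesis
      by (rule Bochner_Integration.integrable_bound[OF integrable_norm[OF that]]) (auto simp: norm_mult)
  qed
  have "(\<integral>x. of_real (p x) * iexp (t * x) \<partial>lborel) = (\<integral>x. of_real (q x) * iexp (t * x) \<partial>lborel)" for t
  proof -
    have "(\<integral>x. of_real (p x) * iexp (t * x) \<partial>lborel) - (\<integral>x. of_real (q x) * iexp (t * x) \<partial>lborel)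
        = (\<integral>x. of_real (p x) * iexp (t * x) - of_real (q x) * iexp (t * x) \<partial>lborel)"
      using ie[OF pi] ie[OF qi] by simp
    also have "\<dots> = (\<integral>x. of_real (g x) * iexp (t * x) \<partial>lborel)"
      by (simp add: gpq algebra_simps)
    finally show ?thesis using z[of t] by simp
  qed
  then have "AE x in lborel. p x = q x"
    by (intro FT_unique_real_nonneg pi qi) (auto simp: p_def q_def)
  then show ?thesis by eventually_elim (simp add: gpq)
qed

lemma FT_unique:
  fixes h :: "real \<Rightarrow> complex"
  assumes h: "integrable lborel h"
    and z: "\<And>lam. (\<integral>s. h s * exp (- \<i> * of_real (lam * s)) \<partial>lborel) = 0"
  shows "AE x in lborel. h x = 0"
proof -
  have [measurable]: "h \<in> borel_measurable borel" using h by auto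
  have ie: "integrable lborel (\<lambda>x. h x * iexp (t * x))" for t
    by (rule Bochner_Integration.integrable_bound[OF integrable_norm[OF h]]) (auto simp: norm_mult)
  have z1: "(\<integral>x. h x * iexp (t * x) \<partial>lborel) = 0" for t
    using z[of "- t"] by simp
  have z2: "(\<integral>x. cnj (h x) * iexp (t * x) \<partial>lborel) = 0" for t
  proof -
    have "(\<integral>x. cnj (h x) * iexp (t * x) \<partial>lborel) = (\<integral>x. cnj (h x * iexp (- t * x)) \<partial>lborel)"
      by (simp add: exp_cnj)
    also have "\<dots> = cnj (\<integral>x. h x * iexp (- t * x) \<partial>lborel)" by (rule Bochner_Integration.integral_cnj)
    also have "\<dots> = 0" using z1[of "- t"] by simp
    finally show ?thesis .
  qed
  have [measurable]: "(\<lambda>x. cnj (h x)) \<in> borel_measurable borel"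
    using borel_measurable_continuous_on[OF continuous_on_cnj[OF continuous_on_id], of h borel] by simp
  have ie2: "integrable lborel (\<lambda>x. cnj (h x) * iexp (t * x))" for t
    by (rule Bochner_Integration.integrable_bound[OF integrable_norm[OF h]]) (auto simp: norm_mult)
  have re: "(h x * e + cnj (h x) * e) / 2 = of_real (Re (h x)) * e" for x e
  proof -
    have "h x * e + cnj (h x) * e = (h x + cnj (h x)) * e" by (simp add: algebra_simps)
    then show ?thesis by (simp add: complex_add_cnj)
  qed
  have im: "(h x * e - cnj (h x) * e) / (2 * \<i>) = of_real (Im (h x)) * e" for x e
  proof -
    have "h x * e - cnj (h x) * e = (h x - cnj (h x)) * e" by (simp add: algebra_simps)
    also have "\<dots> = 2 * \<i> * (of_real (Im (h x)) * e)" by (simp add: complex_diff_cnj algebra_simps)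
    finally show ?thesis by simp
  qed
  have "AE x in lborel. Re (h x) = 0"
  proof (rule FT_unique_real)
    show "integrable lborel (\<lambda>x. Re (h x))" using h by (rule integrable_Re)
    fix t
    have "(\<integral>x. of_real (Re (h x)) * iexp (t * x) \<partial>lborel)
        = (\<integral>x. (h x * iexp (t * x) + cnj (h x) * iexp (t * x)) / 2 \<partial>lborel)"
      by (simp only: re)
    also have "\<dots> = ((\<integral>x. h x * iexp (t * x) \<partial>lborel) + (\<integral>x. cnj (h x) * iexp (t * x) \<partial>lborel)) / 2"
      using ie[of t] ie2[of t] by simp
    also have "\<dots> = 0" by (simp only: z1 z2) simp
    finally show "(\<integral>x. of_real (Re (h x)) * iexp (t * x) \<partial>lborel) = 0" .
  qed
  moreover have "AE x in lborel. Im (h x) = 0"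
  proof (rule FT_unique_real)
    show "integrable lborel (\<lambda>x. Im (h x))" using h by (rule integrable_Im)
    fix t
    have "(\<integral>x. of_real (Im (h x)) * iexp (t * x) \<partial>lborel)
        = (\<integral>x. (h x * iexp (t * x) - cnj (h x) * iexp (t * x)) / (2 * \<i>) \<partial>lborel)"
      by (simp only: im)
    also have "\<dots> = ((\<integral>x. h x * iexp (t * x) \<partial>lborel) - (\<integral>x. cnj (h x) * iexp (t * x) \<partial>lborel)) / (2 * \<i>)"
      using ie[of t] ie2[of t] by simp
    also have "\<dots> = 0" by (simp only: z1 z2) simp
    finally show "(\<integral>x. of_real (Im (h x)) * iexp (t * x) \<partial>lborel) = 0" .
  qed
  ultimately show ?thesis by eventually_elim (simp add: complex_eq_iff)
qed


lemma emb_Pair: "emb i0 (s, x) = (\<chi> i. if i = i0 then s else x i)"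
  unfolding emb_def by (simp only: fst_conv snd_conv)

lemma fhat_repr:
  fixes \<omega> :: "real^'n"
  assumes "norm \<omega> = 1"
  obtains i0 :: 'n and Q :: "real^'n \<Rightarrow> real^'n" where "orthogonal_transformation Q" "Q (axis i0 1) = \<omega>"
    "\<And>f \<tau>. fhat \<omega> f \<tau> = (\<integral>x. f (Q (emb i0 (- \<tau>, x))) \<partial>Pi\<^sub>M (UNIV - {i0}) (\<lambda>_. lborel))"
proof -
  define i0 :: 'n where "i0 = (SOME i::'n. True)"
  define Q where "Q = (SOME Q::real^'n\<Rightarrow>real^'n. orthogonal_transformation Q \<and> Q (axis i0 1) = \<omega>)"
  have "\<exists>Q::real^'n\<Rightarrow>real^'n. orthogonal_transformation Q \<and> Q (axis i0 1) = \<omega>"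
    using orthogonal_transformation_exists_1[of "axis i0 (1::real)" \<omega>] assms by auto
  then have Q: "orthogonal_transformation Q \<and> Q (axis i0 1) = \<omega>"
    unfolding Q_def by (rule someI_ex)
  have fh: "fhat \<omega> f \<tau> = (\<integral>x. f (Q (emb i0 (- \<tau>, x))) \<partial>Pi\<^sub>M (UNIV - {i0}) (\<lambda>_. lborel))" for f \<tau>
    unfolding fhat_def hplane_integral_def Let_def i0_def[symmetric] Q_def[symmetric]
    by (simp only: emb_Pair)
  show ?thesis using Q that[of Q i0, OF _ _ fh] by blast
qed

lemma Phi_props:
  fixes Q :: "real^'n \<Rightarrow> real^'n"
  assumes Q: "orthogonal_transformation Q" and dim: "CARD('n) = 2 \<or> CARD('n) = 3"
  shows "(\<lambda>z. Q (emb i0 z)) \<in> measurable (lborel \<Otimes>\<^sub>M Pi\<^sub>M (UNIV - {i0}) (\<lambda>_. lborel)) borel"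
    and "distr (lborel \<Otimes>\<^sub>M Pi\<^sub>M (UNIV - {i0}) (\<lambda>_. lborel)) borel (\<lambda>z. Q (emb i0 z)) = lborel"
proof -
  have mQ: "Q \<in> borel_measurable borel"
    using orthogonal_transformation_linear[OF Q]
    by (intro borel_measurable_continuous_onI linear_continuous_on) (simp add: linear_conv_bounded_linear)
  show m: "(\<lambda>z. Q (emb i0 z)) \<in> measurable (lborel \<Otimes>\<^sub>M Pi\<^sub>M (UNIV - {i0}) (\<lambda>_. lborel)) borel"
    using measurable_comp[OF emb_measurable mQ] by (simp add: o_def)
  have "distr (lborel \<Otimes>\<^sub>M Pi\<^sub>M (UNIV - {i0}) (\<lambda>_. lborel)) borel (\<lambda>z. Q (emb i0 z))
     = distr (distr (lborel \<Otimes>\<^sub>M Pi\<^sub>M (UNIV - {i0}) (\<lambda>_. lborel)) borel (emb i0)) borel Q"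
    by (subst distr_distr[OF mQ emb_measurable]) (simp add: o_def)
  also have "\<dots> = lborel" by (simp add: lborel_emb lborel_orth[OF Q dim])
  finally show "distr (lborel \<Otimes>\<^sub>M Pi\<^sub>M (UNIV - {i0}) (\<lambda>_. lborel)) borel (\<lambda>z. Q (emb i0 z)) = lborel" .
qed

lemma Phi_inner:
  assumes Q: "orthogonal_transformation Q" and "Q (axis i0 1) = \<omega>"
  shows "Q (emb i0 (s, x)) \<bullet> \<omega> = s"
proof -
  have "Q (emb i0 (s, x)) \<bullet> \<omega> = emb i0 (s, x) \<bullet> axis i0 1"
    using Q assms(2) by (metis orthogonal_transformation_def)
  also have "\<dots> = s" by (simp add: emb_def inner_axis)
  finally show ?thesis .
qed


lemma borel_version_complex:
  fixes f :: "'a::euclidean_space \<Rightarrow> complex"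
  assumes "f \<in> borel_measurable lebesgue"
  obtains g where "g \<in> borel_measurable borel" "AE x in lborel. f x = g x"
proof -
  have "(\<lambda>x. Re (f x)) \<in> borel_measurable (completion lborel)" using assms by measurable
  then obtain g1 where g1: "g1 \<in> borel_measurable lborel" "AE x in lborel. Re (f x) = g1 x"
    using completion_ex_borel_measurable_real by blast
  have "(\<lambda>x. Im (f x)) \<in> borel_measurable (completion lborel)" using assms by measurable
  then obtain g2 where g2: "g2 \<in> borel_measurable lborel" "AE x in lborel. Im (f x) = g2 x"
    using completion_ex_borel_measurable_real by blast
  have [measurable]: "g1 \<in> borel_measurable borel" "g2 \<in> borel_measurable borel" using g1 g2 by auto
  show ?thesis
  proof (rule that[of "\<lambda>x. Complex (g1 x) (g2 x)"])
    show "(\<lambda>x. Complex (g1 x) (g2 x)) \<in> borel_measurable borel"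
      by (subst borel_measurable_complex_iff) simp
    show "AE x in lborel. f x = Complex (g1 x) (g2 x)"
      using g1(2) g2(2) by eventually_elim (simp add: complex_eq_iff)
  qed
qed

lemma U_facts:
  assumes "admissible_domain Ds M"
  shows "open (union_dom Ds M)" "bounded (union_dom Ds M)" "union_dom Ds M \<noteq> {}"
proof -
  have b: "\<And>m. m \<in> {1..M} \<Longrightarrow> bounded_domain (Ds m)" and M: "M \<ge> 1"
    using assms by (auto simp: admissible_domain_def)
  show "open (union_dom Ds M)" unfolding union_dom_def using b by (auto simp: bounded_domain_def)
  show "bounded (union_dom Ds M)" unfolding union_dom_def using b by (auto simp: bounded_domain_def)
  show "union_dom Ds M \<noteq> {}" unfolding union_dom_def using b[of 1] M by (auto simp: bounded_domain_def)
qed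

lemma inner_bdd:
  fixes U :: "(real^'n) set"
  assumes "bounded U"
  shows "bdd_below ((\<lambda>z. z \<bullet> \<omega>) ` U)" "bdd_above ((\<lambda>z. z \<bullet> \<omega>) ` U)"
proof -
  obtain B where B: "\<And>z. z \<in> U \<Longrightarrow> norm z \<le> B" using assms by (auto simp: bounded_iff)
  have "\<bar>z \<bullet> \<omega>\<bar> \<le> B * norm \<omega>" if "z \<in> U" for z
    using Cauchy_Schwarz_ineq2[of z \<omega>] B[OF that] by (meson mult_right_mono norm_ge_zero order_trans)
  then have h: "\<And>z. z \<in> U \<Longrightarrow> - (B * norm \<omega>) \<le> z \<bullet> \<omega> \<and> z \<bullet> \<omega> \<le> B * norm \<omega>"
    by (metis abs_le_D1 abs_le_D2 minus_le_iff)
  show "bdd_below ((\<lambda>z. z \<bullet> \<omega>) ` U)" using h by (intro bdd_belowI2) blast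
  show "bdd_above ((\<lambda>z. z \<bullet> \<omega>) ` U)" using h by (intro bdd_aboveI2) blast
qed

lemma a_lt_b:
  fixes U :: "(real^'n) set"
  assumes "open U" "bounded U" "U \<noteq> {}" "norm \<omega> = 1"
  shows "(INF z\<in>U. z \<bullet> \<omega>) < (SUP z\<in>U. z \<bullet> \<omega>)"
proof -
  obtain y where y: "y \<in> U" using assms by auto
  then obtain e where e: "e > 0" "ball y e \<subseteq> U" using assms(1) open_contains_ball by blast
  have y1: "y - (e/2) *\<^sub>R \<omega> \<in> U" "y + (e/2) *\<^sub>R \<omega> \<in> U"
    using e assms(4) by (auto intro!: subsetD[OF e(2)] simp: dist_norm)
  have "(INF z\<in>U. z \<bullet> \<omega>) \<le> (y - (e/2) *\<^sub>R \<omega>) \<bullet> \<omega>"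
    by (rule cINF_lower[OF inner_bdd(1)[OF assms(2)] y1(1)])
  also have "\<dots> < (y + (e/2) *\<^sub>R \<omega>) \<bullet> \<omega>"
    using e assms(4) by (simp add: inner_diff_left inner_add_left dot_square_norm power2_eq_square)
  also have "\<dots> \<le> (SUP z\<in>U. z \<bullet> \<omega>)"
    by (rule cSUP_upper[OF y1(2) inner_bdd(2)[OF assms(2)]])
  finally show ?thesis .
qed

lemma exp_identity:
  assumes "\<theta> - d = c *\<^sub>R \<omega>"
  shows "exp (- \<i> * complex_of_real (k * (\<theta> \<bullet> y))) * (w * exp (\<i> * complex_of_real (k * (y \<bullet> d))))
       = w * exp (- \<i> * complex_of_real (k * c * (y \<bullet> \<omega>)))"
proof -
  have i1: "\<theta> \<bullet> y - d \<bullet> y = (\<theta> - d) \<bullet> y" by (simp only: inner_diff_left)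
  have i2: "(\<theta> - d) \<bullet> y = c * (y \<bullet> \<omega>)" by (simp only: assms inner_scaleR_left inner_commute[of \<omega> y])
  have e1: "k * (\<theta> \<bullet> y) - k * (y \<bullet> d) = k * c * (y \<bullet> \<omega>)"
    using i1 i2 by (simp add: inner_commute[of y d] right_diff_distrib[symmetric])
  have e2: "- \<i> * complex_of_real (k * (\<theta> \<bullet> y)) + \<i> * complex_of_real (k * (y \<bullet> d))
      = - \<i> * complex_of_real (k * c * (y \<bullet> \<omega>))"
    unfolding e1[symmetric] of_real_diff by (simp add: algebra_simps)
  have "exp (- \<i> * complex_of_real (k * (\<theta> \<bullet> y))) * (w * exp (\<i> * complex_of_real (k * (y \<bullet> d))))
      = w * exp (- \<i> * complex_of_real (k * (\<theta> \<bullet> y)) + \<i> * complex_of_real (k * (y \<bullet> d)))"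
    by (simp only: exp_add mult_ac)
  then show ?thesis by (simp only: e2)
qed


lemma norm_exp_mi: "norm (exp (- \<i> * complex_of_real t)) = 1"
  using norm_exp_i_times[of "- t"] by simp

lemma le_1_sq: "(t::real) \<le> 1 + t\<^sup>2"
proof (cases "t \<le> 1")
  case True then show ?thesis using zero_le_power2[of t] by linarith
next
  case False
  then have "t * 1 \<le> t * t" by (intro mult_left_mono) auto
  then show ?thesis by (simp add: power2_eq_square)
qed

lemma slice_main:
  fixes Ds :: "nat \<Rightarrow> (real^'n) set" and f :: "real^'n \<Rightarrow> complex" and \<omega> d \<theta> :: "real^'n" and c :: real
  assumes dim: "CARD('n) = 2 \<or> CARD('n) = 3"
    and \<omega>: "norm \<omega> = 1" and c: "\<theta> - d = c *\<^sub>R \<omega>"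
    and D: "admissible_domain Ds M" and f: "L2 f"
    and supp: "\<forall>y. y \<notin> union_dom Ds M \<longrightarrow> f y = 0"
    and null: "{\<tau>. hplane \<omega> \<tau> \<subseteq> strip (union_dom Ds M) \<omega> \<and> fhat \<omega> f \<tau> = 0} \<in> null_sets lebesgue"
  shows "\<exists>G. integrable lborel G
     \<and> (\<forall>k. far_field (union_dom Ds M) f d \<theta> k = (\<integral>s. G s * exp (- \<i> * complex_of_real (k * c * s)) \<partial>lborel))
     \<and> (\<forall>s. s \<notin> {(INF z\<in>union_dom Ds M. z \<bullet> \<omega>)..(SUP z\<in>union_dom Ds M. z \<bullet> \<omega>)} \<longrightarrow> G s = 0)
     \<and> (AE s in lborel. s \<in> {(INF z\<in>union_dom Ds M. z \<bullet> \<omega>)..(SUP z\<in>union_dom Ds M. z \<bullet> \<omega>)} \<longrightarrow> G s \<noteq> 0)"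
proof -
  define U where "U = union_dom Ds M"
  define a where "a = (INF z\<in>U. z \<bullet> \<omega>)"
  define b where "b = (SUP z\<in>U. z \<bullet> \<omega>)"
  have Uo: "open U" and Ub: "bounded U" and Une: "U \<noteq> {}" using U_facts[OF D] by (auto simp: U_def)
  have Uborel[measurable]: "U \<in> sets borel" using Uo by auto
  have ab_mem: "a \<le> z \<bullet> \<omega> \<and> z \<bullet> \<omega> \<le> b" if "z \<in> U" for z
    unfolding a_def b_def
    using cINF_lower[OF inner_bdd(1)[OF Ub] that] cSUP_upper[OF that inner_bdd(2)[OF Ub]] by simp
  obtain Q and i0 :: 'n where Q: "orthogonal_transformation Q" "Q (axis i0 1) = \<omega>"
    and fh: "\<And>f \<tau>. fhat \<omega> f \<tau> = (\<integral>x. f (Q (emb i0 (- \<tau>, x))) \<partial>Pi\<^sub>M (UNIV - {i0}) (\<lambda>_. lborel))"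
    using fhat_repr[OF \<omega>] by metis
  define J where "J = UNIV - {i0}"
  define PJ where "PJ = Pi\<^sub>M J (\<lambda>_. lborel::real measure)"
  define Phi where "Phi = (\<lambda>z. Q (emb i0 z))"
  interpret PJ: finite_product_sigma_finite "\<lambda>_. lborel::real measure" J by standard (simp add: J_def)
  interpret P: pair_sigma_finite lborel PJ unfolding PJ_def ..
  have Phim[measurable]: "Phi \<in> measurable (lborel \<Otimes>\<^sub>M PJ) borel"
    and Phid: "distr (lborel \<Otimes>\<^sub>M PJ) borel Phi = lborel"
    using Phi_props[OF Q(1) dim, of i0] by (simp_all add: Phi_def PJ_def J_def)
  have Phiw: "Phi (s, x) \<bullet> \<omega> = s" for s x using Phi_inner[OF Q] by (simp add: Phi_def)
  have fh': "fhat \<omega> f (- s) = (\<integral>x. f (Phi (s, x)) \<partial>PJ)" for s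
    using fh[of f "- s"] by (simp add: Phi_def PJ_def J_def)
  have slm: "(\<lambda>x. h (Phi (s, x))) \<in> borel_measurable PJ" if "h \<in> borel_measurable borel" for s and h :: "real^'n \<Rightarrow> complex"
    using measurable_compose[OF measurable_compose[OF measurable_Pair1'[of s lborel PJ] Phim] that] by simp

  have fm: "f \<in> borel_measurable lebesgue" using f by (simp add: L2_def)
  obtain g where gm[measurable]: "g \<in> borel_measurable borel" and fg: "AE y in lborel. f y = g y"
    using borel_version_complex[OF fm] by blast
  define f0 where "f0 y = (if y \<in> U then g y else 0)" for y
  have f0m[measurable]: "f0 \<in> borel_measurable borel" unfolding f0_def by measurable
  have ff0: "AE y in lborel. f y = f0 y"
    using fg by eventually_elim (use supp in \<open>auto simp: f0_def U_def\<close>)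
  have f0U: "f0 y = 0" if "y \<notin> U" for y using that by (simp add: f0_def)

  have sq: "integrable lborel (\<lambda>y. (norm (f0 y))\<^sup>2)"
  proof -
    have i1: "integrable lebesgue (\<lambda>y. (norm (f y))\<^sup>2)" using f by (simp add: L2_def)
    have a1: "AE y in lebesgue. (norm (f y))\<^sup>2 = (norm (f0 y))\<^sup>2"
      using ff0 unfolding AE_completion_iff by eventually_elim simp
    have m1: "(\<lambda>y. (norm (f0 y))\<^sup>2) \<in> borel_measurable lebesgue"
      by (intro measurable_completion) simp
    have "integrable lebesgue (\<lambda>y. (norm (f0 y))\<^sup>2)"
      by (rule integrable_cong_AE_imp[OF i1 m1 a1])
    then show ?thesis using integrable_completion[of "\<lambda>y. (norm (f0 y))\<^sup>2" lborel] by simp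
  qed
  have indU: "integrable lborel (indicator U :: _ \<Rightarrow> real)"
    using emeasure_bounded_finite[OF Ub] by (simp add: integrable_indicator_iff)
  have f0i: "integrable lborel f0"
  proof (rule Bochner_Integration.integrable_bound[OF Bochner_Integration.integrable_add[OF indU sq]])
    show "f0 \<in> borel_measurable lborel" by simp
    have "norm (f0 y) \<le> norm (indicator U y + (norm (f0 y))\<^sup>2)" for y
    proof (cases "y \<in> U")
      case True
      have "norm (f0 y) \<le> 1 + (norm (f0 y))\<^sup>2"
        by (rule le_1_sq)
      then show ?thesis using True by simp
    next
      case False then show ?thesis by (simp add: f0U)
    qed
    then show "AE y in lborel. norm (f0 y) \<le> norm (indicator U y + (norm (f0 y))\<^sup>2)" by simp
  qed

  have fub: "integrable (lborel \<Otimes>\<^sub>M PJ) (\<lambda>z. F (Phi z)) \<and>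
      (\<integral>y. F y \<partial>lborel) = (\<integral>s. (\<integral>x. F (Phi (s, x)) \<partial>PJ) \<partial>lborel)"
    if Fi: "integrable lborel F" for F :: "real^'n \<Rightarrow> complex"
  proof -
    have Fm: "F \<in> borel_measurable borel" using Fi by auto
    have i: "integrable (lborel \<Otimes>\<^sub>M PJ) (\<lambda>z. F (Phi z))"
      using Fi integrable_distr_eq[OF Phim Fm] Phid by simp
    have "(\<integral>y. F y \<partial>lborel) = (\<integral>z. F (Phi z) \<partial>(lborel \<Otimes>\<^sub>M PJ))"
      using integral_distr[OF Phim Fm] Phid by simp
    also have "\<dots> = (\<integral>s. (\<integral>x. F (Phi (s, x)) \<partial>PJ) \<partial>lborel)"
      using P.integral_fst'[OF i] by simp
    finally show ?thesis using i by simp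
  qed

  define G where "G = (\<lambda>s. \<integral>x. f0 (Phi (s, x)) \<partial>PJ)"
  have Gi: "integrable lborel G"
    unfolding G_def using P.integrable_fst'[OF conjunct1[OF fub[OF f0i]]] by simp

  have FF: "far_field U f d \<theta> k = (\<integral>s. G s * exp (- \<i> * complex_of_real (k * c * s)) \<partial>lborel)" for k
  proof -
    define F where "F y = f0 y * exp (- \<i> * complex_of_real (k * c * (y \<bullet> \<omega>)))" for y
    have Fm[measurable]: "F \<in> borel_measurable borel" unfolding F_def by measurable
    have Fi: "integrable lborel F" unfolding F_def
      by (rule Bochner_Integration.integrable_bound[OF integrable_norm[OF f0i]]) (auto simp: norm_mult norm_exp_mi)
    have [measurable]: "f \<in> borel_measurable lebesgue" by (rule fm)
    have m1: "(\<lambda>y. indicator U y *\<^sub>R (exp (- \<i> * complex_of_real (k * (\<theta> \<bullet> y))) * source_F f d y k)) \<in> borel_measurable lebesgue"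
    proof -
      have [measurable]: "(\<lambda>y. indicator U y *\<^sub>R exp (- \<i> * complex_of_real (k * (\<theta> \<bullet> y))) * exp (\<i> * complex_of_real (k * (y \<bullet> d)))) \<in> borel_measurable lebesgue"
        by (intro measurable_completion) measurable
      have "(\<lambda>y. (indicator U y *\<^sub>R exp (- \<i> * complex_of_real (k * (\<theta> \<bullet> y))) * exp (\<i> * complex_of_real (k * (y \<bullet> d)))) * f y) \<in> borel_measurable lebesgue"
        by measurable
      then show ?thesis by (simp add: source_F_def mult_ac)
    qed
    have "far_field U f d \<theta> k = (\<integral>y. indicator U y *\<^sub>R (exp (- \<i> * complex_of_real (k * (\<theta> \<bullet> y))) * source_F f d y k) \<partial>lebesgue)"
      by (simp add: far_field_def set_lebesgue_integral_def)
    also have "\<dots> = (\<integral>y. F y \<partial>lebesgue)"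
    proof (rule integral_cong_AE[OF m1])
      show "F \<in> borel_measurable lebesgue" by (intro measurable_completion) simp
      show "AE y in lebesgue. indicator U y *\<^sub>R (exp (- \<i> * complex_of_real (k * (\<theta> \<bullet> y))) * source_F f d y k) = F y"
        unfolding AE_completion_iff using ff0
      proof eventually_elim
        case (elim y)
        show ?case
        proof (cases "y \<in> U")
          case True
          then show ?thesis using exp_identity[OF c, of k y "f0 y"] elim by (simp add: source_F_def F_def)
        next
          case False
          then show ?thesis by (simp add: F_def f0U)
        qed
      qed
    qed
    also have "\<dots> = (\<integral>y. F y \<partial>lborel)" by (rule integral_completion) simp
    also have "\<dots> = (\<integral>s. (\<integral>x. F (Phi (s, x)) \<partial>PJ) \<partial>lborel)" by (rule conjunct2[OF fub[OF Fi]])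
    also have "\<dots> = (\<integral>s. G s * exp (- \<i> * complex_of_real (k * c * s)) \<partial>lborel)"
      by (simp add: F_def Phiw G_def)
    finally show ?thesis .
  qed

  have Gsupp: "G s = 0" if "s \<notin> {a..b}" for s
  proof -
    have "Phi (s, x) \<notin> U" for x using ab_mem[of "Phi (s, x)"] that Phiw[of s x] by auto
    then show ?thesis by (simp add: G_def f0U)
  qed

  let ?N = "{\<tau>. hplane \<omega> \<tau> \<subseteq> strip U \<omega> \<and> fhat \<omega> f \<tau> = 0}"
  have AE1: "AE s in lborel. - s \<notin> ?N"
  proof -
    have "AE \<tau> in lborel. \<tau> \<notin> ?N" using AE_not_in[OF null] by (simp add: AE_completion_iff U_def)
    then obtain N' where N': "{\<tau>. \<not> \<tau> \<notin> ?N} \<subseteq> N'" "emeasure lborel N' = 0" "N' \<in> sets lborel"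
      by (auto elim: AE_E)
    have "emeasure lborel (uminus -` N') = emeasure (distr lborel borel uminus) N'"
      using N'(3) by (subst emeasure_distr) auto
    also have "\<dots> = 0" using N'(2) by (simp add: lborel_distr_uminus)
    finally have e0: "emeasure lborel (uminus -` N') = 0" .
    have um: "(\<lambda>x::real. - x) \<in> borel_measurable borel" by simp
    have "uminus -` N' \<in> sets borel"
      using measurable_sets[OF um, of N'] N'(3) by simp
    with e0 have "uminus -` N' \<in> null_sets lborel" by (auto simp: null_sets_def)
    then show ?thesis by (rule AE_I') (use N'(1) in auto)
  qed
  have AE2: "AE s in lborel. AE x in PJ. f (Phi (s, x)) = f0 (Phi (s, x))"
  proof -
    from ff0 obtain N0 where N0: "{y. f y \<noteq> f0 y} \<subseteq> N0" "emeasure lborel N0 = 0" "N0 \<in> sets lborel"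
      by (auto elim!: AE_E)
    have "emeasure (lborel \<Otimes>\<^sub>M PJ) (Phi -` N0 \<inter> space (lborel \<Otimes>\<^sub>M PJ)) = emeasure (distr (lborel \<Otimes>\<^sub>M PJ) borel Phi) N0"
      using N0(3) by (subst emeasure_distr) auto
    also have "\<dots> = 0" using N0(2) by (simp add: Phid)
    finally have "Phi -` N0 \<inter> space (lborel \<Otimes>\<^sub>M PJ) \<in> null_sets (lborel \<Otimes>\<^sub>M PJ)"
      using N0(3) measurable_sets[OF Phim, of N0] by (auto simp: null_sets_def)
    then have "AE z in lborel \<Otimes>\<^sub>M PJ. f (Phi z) = f0 (Phi z)"
      by (rule AE_I') (use N0(1) in auto)
    then show ?thesis by (rule P.AE_pair)
  qed
  have AEG: "AE s in lborel. s \<in> {a..b} \<longrightarrow> G s \<noteq> 0"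
    using AE1 AE2
  proof eventually_elim
    case (elim s)
    show ?case
    proof
      assume s: "s \<in> {a..b}"
      have hs: "hplane \<omega> (- s) \<subseteq> strip U \<omega>"
        using s by (auto simp: hplane_def strip_def a_def b_def)
      then have fne: "fhat \<omega> f (- s) \<noteq> 0" using elim(1) by auto
      then have int: "integrable PJ (\<lambda>x. f (Phi (s, x)))"
        using fh' not_integrable_integral_eq by metis
      have "G s = (\<integral>x. f (Phi (s, x)) \<partial>PJ)"
        unfolding G_def
        by (rule integral_cong_AE[OF slm[OF f0m] borel_measurable_integrable[OF int]])
           (use elim(2) in \<open>eventually_elim, simp\<close>)
      then show "G s \<noteq> 0" using fne fh' by simp
    qed
  qed
  show ?thesis
    using Gi FF Gsupp AEG unfolding U_def a_def b_def by blast
qed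


lemma interval_not_AE:
  assumes "a < m" "AE s in lborel. s \<notin> {a<..<m::real}"
  shows False
proof -
  from assms(2) obtain N where N: "{s \<in> space lborel. \<not> s \<notin> {a<..<m}} \<subseteq> N" "emeasure lborel N = 0" "N \<in> sets lborel"
    by (rule AE_E)
  have "emeasure lborel {a<..<m} \<le> emeasure lborel N"
    using N by (intro emeasure_mono) auto
  then show False using N(2) assms(1) by simp
qed

lemma ends_le:
  fixes G G' :: "real \<Rightarrow> complex"
  assumes ab: "a < b" and nz: "AE s in lborel. s \<in> {a..b} \<longrightarrow> G s \<noteq> 0"
    and z': "\<forall>s. s \<notin> {a'..b'} \<longrightarrow> G' s = 0" and eq: "AE s in lborel. G s = G' s"
  shows "a' \<le> a" "b \<le> b'"
proof -
  show "a' \<le> a"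
  proof (rule ccontr)
    assume "\<not> a' \<le> a"
    define m where "m = min a' b"
    have am: "a < m" using ab \<open>\<not> a' \<le> a\<close> by (simp add: m_def)
    have "AE s in lborel. s \<notin> {a<..<m}"
      using nz eq by eventually_elim (use z' in \<open>auto simp: m_def\<close>)
    then show False using interval_not_AE am by blast
  qed
  show "b \<le> b'"
  proof (rule ccontr)
    assume "\<not> b \<le> b'"
    define m where "m = max b' a"
    have am: "m < b" using ab \<open>\<not> b \<le> b'\<close> by (simp add: m_def)
    have "AE s in lborel. s \<notin> {m<..<b}"
      using nz eq by eventually_elim (use z' in \<open>auto simp: m_def\<close>)
    then show False using interval_not_AE am by blast
  qed
qed

lemma int_exp:
  fixes G :: "real \<Rightarrow> complex"
  assumes "integrable lborel G"
  shows "integrable lborel (\<lambda>s. G s * exp (- \<i> * complex_of_real (r * s)))"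
proof -
  have [measurable]: "G \<in> borel_measurable borel" using assms by auto
  show ?thesis
    by (rule Bochner_Integration.integrable_bound[OF integrable_norm[OF assms]]) (auto simp: norm_mult norm_exp_mi)
qed

theorem theorem2p4:
  fixes Ds Ds' :: "nat \<Rightarrow> (real^'n) set" and M M' :: nat
    and f f' :: "real^'n \<Rightarrow> complex" and d \<theta> :: "real^'n" and kmax :: real
  assumes dim: "CARD('n) = 2 \<or> CARD('n) = 3"
    and kmax: "kmax > 0"
    and d: "norm d = 1" and \<theta>: "norm \<theta> = 1" and \<theta>d: "\<theta> \<noteq> d"
    and D: "admissible_domain Ds M"
    and f: "L2 f" and f_supp: "\<forall>y. y \<notin> union_dom Ds M \<longrightarrow> f y = 0"
    and f_null: "{\<tau>. hplane ((1 / norm (\<theta> - d)) *\<^sub>R (\<theta> - d)) \<tau>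
                        \<subseteq> strip (union_dom Ds M) ((1 / norm (\<theta> - d)) *\<^sub>R (\<theta> - d))
                     \<and> fhat ((1 / norm (\<theta> - d)) *\<^sub>R (\<theta> - d)) f \<tau> = 0} \<in> null_sets lebesgue"
    and D': "admissible_domain Ds' M'"
    and f': "L2 f'" and f'_supp: "\<forall>y. y \<notin> union_dom Ds' M' \<longrightarrow> f' y = 0"
    and f'_null: "{\<tau>. hplane ((1 / norm (\<theta> - d)) *\<^sub>R (\<theta> - d)) \<tau>
                        \<subseteq> strip (union_dom Ds' M') ((1 / norm (\<theta> - d)) *\<^sub>R (\<theta> - d))
                     \<and> fhat ((1 / norm (\<theta> - d)) *\<^sub>R (\<theta> - d)) f' \<tau> = 0} \<in> null_sets lebesgue"
    and same: "\<forall>k\<in>{0<..<kmax}. far_field (union_dom Ds M) f d \<theta> k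
                                = far_field (union_dom Ds' M') f' d \<theta> k"
  shows "strip (union_dom Ds M) ((1 / norm (\<theta> - d)) *\<^sub>R (\<theta> - d))
       = strip (union_dom Ds' M') ((1 / norm (\<theta> - d)) *\<^sub>R (\<theta> - d))"
proof -
  define c where "c = norm (\<theta> - d)"
  define \<omega> where "\<omega> = (1 / norm (\<theta> - d)) *\<^sub>R (\<theta> - d)"
  have c0: "c > 0" using \<theta>d by (simp add: c_def)
  have \<omega>n: "norm \<omega> = 1" using c0 by (simp add: \<omega>_def c_def)
  have c\<omega>: "\<theta> - d = c *\<^sub>R \<omega>" using c0 by (simp add: \<omega>_def c_def)
  define U where "U = union_dom Ds M"
  define U' where "U' = union_dom Ds' M'"
  define a where "a = (INF z\<in>U. z \<bullet> \<omega>)"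
  define b where "b = (SUP z\<in>U. z \<bullet> \<omega>)"
  define a' where "a' = (INF z\<in>U'. z \<bullet> \<omega>)"
  define b' where "b' = (SUP z\<in>U'. z \<bullet> \<omega>)"
  obtain G where Gi: "integrable lborel G"
    and GF: "\<And>k. far_field U f d \<theta> k = (\<integral>s. G s * exp (- \<i> * complex_of_real (k * c * s)) \<partial>lborel)"
    and Gz: "\<And>s. s \<notin> {a..b} \<Longrightarrow> G s = 0"
    and Gnz: "AE s in lborel. s \<in> {a..b} \<longrightarrow> G s \<noteq> 0"
    using slice_main[OF dim \<omega>n c\<omega> D f f_supp f_null[folded \<omega>_def]] unfolding U_def a_def b_def by blast
  obtain G' where G'i: "integrable lborel G'"
    and G'F: "\<And>k. far_field U' f' d \<theta> k = (\<integral>s. G' s * exp (- \<i> * complex_of_real (k * c * s)) \<partial>lborel)"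
    and G'z: "\<And>s. s \<notin> {a'..b'} \<Longrightarrow> G' s = 0"
    and G'nz: "AE s in lborel. s \<in> {a'..b'} \<longrightarrow> G' s \<noteq> 0"
    using slice_main[OF dim \<omega>n c\<omega> D' f' f'_supp f'_null[folded \<omega>_def]] unfolding U'_def a'_def b'_def by blast
  have ab: "a < b" unfolding a_def b_def U_def using U_facts[OF D] by (intro a_lt_b \<omega>n)
  have ab': "a' < b'" unfolding a'_def b'_def U'_def using U_facts[OF D'] by (intro a_lt_b \<omega>n)
  define h where "h s = G s - G' s" for s
  define R where "R = \<bar>a\<bar> + \<bar>b\<bar> + \<bar>a'\<bar> + \<bar>b'\<bar>"
  have R0: "R \<ge> 0" by (simp add: R_def)
  have hi: "integrable lborel h" unfolding h_def using Gi G'i by simp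
  have hs: "h s = 0" if "\<bar>s\<bar> > R" for s
  proof -
    have "s \<notin> {a..b}" "s \<notin> {a'..b'}" using that by (auto simp: R_def)
    then show ?thesis by (simp add: h_def Gz G'z)
  qed
  define l0 where "l0 = c * kmax / 2"
  have l0: "l0 > 0" using c0 kmax by (simp add: l0_def)
  have hz: "(\<integral>s. h s * exp (- \<i> * of_real ((l0 + \<mu>) * s)) \<partial>lborel) = 0" if "\<bar>\<mu>\<bar> < l0" for \<mu>
  proof -
    define k where "k = (l0 + \<mu>) / c"
    have kc: "k * c = l0 + \<mu>" using c0 by (simp add: k_def)
    have "k \<in> {0<..<kmax}"
    proof -
      have "0 < l0 + \<mu>" "l0 + \<mu> < c * kmax" using that by (auto simp: l0_def)
      then show ?thesis using c0 by (auto simp: k_def field_simps)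
    qed
    then have "far_field U f d \<theta> k = far_field U' f' d \<theta> k" using same by (simp add: U_def U'_def)
    then have e: "(\<integral>s. G s * exp (- \<i> * of_real ((l0 + \<mu>) * s)) \<partial>lborel) = (\<integral>s. G' s * exp (- \<i> * of_real ((l0 + \<mu>) * s)) \<partial>lborel)"
      by (simp only: GF G'F kc)
    have "(\<integral>s. h s * exp (- \<i> * of_real ((l0 + \<mu>) * s)) \<partial>lborel)
        = (\<integral>s. G s * exp (- \<i> * of_real ((l0 + \<mu>) * s)) - G' s * exp (- \<i> * of_real ((l0 + \<mu>) * s)) \<partial>lborel)"
      by (simp add: h_def algebra_simps)
    also have "\<dots> = (\<integral>s. G s * exp (- \<i> * of_real ((l0 + \<mu>) * s)) \<partial>lborel) - (\<integral>s. G' s * exp (- \<i> * of_real ((l0 + \<mu>) * s)) \<partial>lborel)"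
      by (rule Bochner_Integration.integral_diff[OF int_exp[OF Gi] int_exp[OF G'i]])
    also have "\<dots> = 0" using e by simp
    finally show ?thesis .
  qed
  have "(\<integral>s. h s * exp (- \<i> * of_real (lam * s)) \<partial>lborel) = 0" for lam
    by (rule FT_zero_ext[OF R0 hi hs l0 hz])
  then have "AE s in lborel. h s = 0" by (intro FT_unique hi)
  then have eqAE: "AE s in lborel. G s = G' s" by eventually_elim (simp add: h_def)
  have eqAE': "AE s in lborel. G' s = G s" using eqAE by eventually_elim simp
  have "a' \<le> a" "b \<le> b'" using ends_le[OF ab Gnz _ eqAE] G'z by auto
  moreover have "a \<le> a'" "b' \<le> b" using ends_le[OF ab' G'nz _ eqAE'] Gz by auto
  ultimately have "a = a'" "b = b'" by auto
  then have "strip U \<omega> = strip U' \<omega>"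
    by (simp add: strip_def a_def b_def a'_def b'_def)
  then show ?thesis by (simp add: U_def U'_def \<omega>_def)
qed


end
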